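(* Let $g\in C^2(\overline U\to\mathbb R)$ and suppose that the discrete transversality inequality $\nabla g(\hat{\bm x}^* )\cdot\bm f^\tau_\pm(\cdot)\ge\hat\alpha_S^2>0$ holds at the arguments $(t,\bm x^\tau(t),\hat t^*,\hat{\bm x}^* )$ for $\bm f^\tau_-$ ($t\in[t_k,\hat t^*]$) and $(\hat t^*,\hat{\bm x}^*,t,\bm x^\tau(t))$ for $\bm f^\tau_+$ ($t\in[\hat t^*,t_{k+1}]$) (as guaranteed for sufficiently small $\tau$ by the discrete transversality lemma). Then for all $t\in[t_k,t_{k+1}]$, $$|t-\hat t^*|\le\frac{\hat M(t-\hat t^* )^2+L_g\|\bm x^\tau(t;\bm x_k,t_k)-\bm x^\tau(\hat t^*;\bm x_k,t_k)\|}{\hat\alpha_S^2},$$ where $L_g$ is the Lipschitz constant of $g$, $\hat M=\frac12\max(\hat M_-,\hat M_+)$, $$\hat M_-=\sup_{t\in[t_k,\hat t^*],\,s\in[0,1]}\big|\bm f^\tau_-(t,\bm x^\tau(t),\hat t^*,\hat{\bm x}^* )\cdot H_g(\bm x^\tau(t)+s(\hat{\bm x}^*-\bm x^\tau(t)))\,\bm f^\tau_-(t,\bm x^\tau(t),\hat t^*,\hat{\bm x}^* )\big|,$$ $$\hat M_+=\sup_{t\in[\hat t^*,t_{k+1}],\,s\in[0,1]}\big|\bm f^\tau_+(\hat t^*,\hat{\bm x}^*,t,\bm x^\tau(t))\cdot H_g(\hat{\bm x}^*+s(\bm x^\tau(t)-\hat{\bm x}^* ))\,\bm f^\tau_+(\hat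 t^*,\hat{\bm x}^*,t,\bm x^\tau(t))\big|,$$ and $H_g$ is the Hessian of $g$.
   Context: Setting: $U\subset\mathbb R^d$ bounded open, switching function $g$, $S=\{g=0\}$, $U_\pm=\{\pm g>0\}$. Discrete vector fields $\bm f^\tau_\pm$. Transition scheme from $\bm x_k\in U_-$ at time $t_k$ with $t_{k+1}=t_k+\tau$: $(\hat t^*,\hat{\bm x}^* )$ with $\hat t^*\in[t_k,t_{k+1}]$ solves $\bm x=\bm x_k+(t-t_k)\bm f^\tau_-(t_k,\bm x_k,t,\bm x)$, $g(\bm x)=0$. Discrete solution $\bm x^\tau(t)=\bm x^\tau(t;\bm x_k,t_k)$: for $t\in[t_k,\hat t^*]$ it satisfies $\hat{\bm x}^*-\bm x^\tau(t)=(\hat t^*-t)\bm f^\tau_-(t,\bm x^\tau(t),\hat t^*,\hat{\bm x}^* )$, and for $t\in[\hat t^*,t_{k+1}]$ it satisfies $\bm x^\tau(t)=\hat{\bm x}^*+(t-\hat t^* )\bm f^\tau_+(\hat t^*,\hat{\bm x}^*,t,\bm x^\tau(t))$; $\bm x^\tau(\hat t^* )=\hat{\bm x}^*$. *)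

theory Defs
  imports "HOL-Analysis.Analysis"
begin

text \<open>Quadratic-form bounds of Lemma 3.5.  Hg x is the Hessian of g at x,
  fm, fp are the discrete vector fields, x the discrete solution,
  ts, xs the transition point (t-hat-star, x-hat-star).\<close>

definition Mhat_minus ::
  "(real^'n \<Rightarrow> real^'n^'n) \<Rightarrow> (real \<Rightarrow> real^'n \<Rightarrow> real \<Rightarrow> real^'n \<Rightarrow> real^'n)
   \<Rightarrow> (real \<Rightarrow> real^'n) \<Rightarrow> real \<Rightarrow> real \<Rightarrow> real^'n \<Rightarrow> real" where
  "Mhat_minus Hg fm x tk ts xs =
     Sup {\<bar>fm t (x t) ts xs \<bullet> (Hg (x t + s *\<^sub>R (xs - x t)) *v fm t (x t) ts xs)\<bar>
          | t s. t \<in> {tk..ts} \<and> s \<in> {0..1}}"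

definition Mhat_plus ::
  "(real^'n \<Rightarrow> real^'n^'n) \<Rightarrow> (real \<Rightarrow> real^'n \<Rightarrow> real \<Rightarrow> real^'n \<Rightarrow> real^'n)
   \<Rightarrow> (real \<Rightarrow> real^'n) \<Rightarrow> real \<Rightarrow> real \<Rightarrow> real^'n \<Rightarrow> real" where
  "Mhat_plus Hg fp x tk1 ts xs =
     Sup {\<bar>fp ts xs t (x t) \<bullet> (Hg (xs + s *\<^sub>R (x t - xs)) *v fp ts xs t (x t))\<bar>
          | t s. t \<in> {ts..tk1} \<and> s \<in> {0..1}}"

end

theory Submission
  imports Defs
begin

lemma mv_uminus [simp]: "(A::real^'n^'m) *v (- w) = - (A *v w)"
  by (metis diff_0 matrix_vector_mult_diff_distrib matrix_vector_mult_0_right)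

lemma taylor2:
  fixes g :: "real^'n \<Rightarrow> real" and Dg :: "real^'n \<Rightarrow> real^'n" and Hg :: "real^'n \<Rightarrow> real^'n^'n"
  assumes gd: "\<And>y. y \<in> closed_segment a b \<Longrightarrow> (g has_derivative (\<lambda>h. Dg y \<bullet> h)) (at y)"
    and Dd: "\<And>y. y \<in> closed_segment a b \<Longrightarrow> (Dg has_derivative (\<lambda>h. Hg y *v h)) (at y)"
    and ne: "a \<noteq> b"
  shows "\<exists>s\<in>{0..1}. g b = g a + Dg a \<bullet> (b - a) + (1/2) * ((b-a) \<bullet> (Hg (a + s *\<^sub>R (b-a)) *v (b-a)))"
proof -
  define d where "d = b - a"
  define p where "p = (\<lambda>s::real. a + s *\<^sub>R d)"
  have pin: "p s \<in> closed_segment a b" if "0 \<le> s" "s \<le> 1" for s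
    using that unfolding p_def d_def closed_segment_def
    by (auto intro!: exI[of _ s] simp: algebra_simps)
  have pd: "(p has_derivative (\<lambda>r. r *\<^sub>R d)) (at s)" for s
    unfolding p_def by (auto intro!: derivative_eq_intros)
  define diff where "diff = (\<lambda>m::nat. if m = 0 then (\<lambda>s. g (p s)) else if m = 1 then (\<lambda>s. Dg (p s) \<bullet> d)
     else (\<lambda>s. d \<bullet> (Hg (p s) *v d)))"
  have D: "\<forall>m t. m < 2 \<and> 0 \<le> t \<and> t \<le> 1 \<longrightarrow> (diff m has_real_derivative diff (Suc m) t) (at t)"
  proof (intro allI impI)
    fix m t assume H: "m < (2::nat) \<and> 0 \<le> t \<and> t \<le> (1::real)"
    then have pt: "p t \<in> closed_segment a b" using pin by auto
    show "(diff m has_real_derivative diff (Suc m) t) (at t)"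
    proof (cases "m = 0")
      case True
      have "((\<lambda>s. g (p s)) has_derivative (\<lambda>r. Dg (p t) \<bullet> (r *\<^sub>R d))) (at t)"
        using has_derivative_compose[OF pd gd[OF pt]] by (simp add: o_def)
      moreover have "(\<lambda>r. Dg (p t) \<bullet> (r *\<^sub>R d)) = (*) (Dg (p t) \<bullet> d)" by (auto simp: fun_eq_iff)
      ultimately show ?thesis using True unfolding diff_def has_field_derivative_def
        by simp
    next
      case False
      then have m1: "m = 1" using H by auto
      have "((\<lambda>s. Dg (p s)) has_derivative (\<lambda>r. Hg (p t) *v (r *\<^sub>R d))) (at t)"
        using has_derivative_compose[OF pd Dd[OF pt]] by (simp add: o_def)
      then have "((\<lambda>s. Dg (p s) \<bullet> d) has_derivative (\<lambda>r. (Hg (p t) *v (r *\<^sub>R d)) \<bullet> d)) (at t)"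
        by (rule has_derivative_inner_left)
      moreover have "(\<lambda>r. (Hg (p t) *v (r *\<^sub>R d)) \<bullet> d) = (*) (d \<bullet> (Hg (p t) *v d))"
        by (auto simp: fun_eq_iff matrix_vector_mult_scaleR inner_commute)
      ultimately show ?thesis using m1 unfolding diff_def has_field_derivative_def
        by simp
    qed
  qed
  obtain t where t: "0 < t" "t < 1"
    and eq: "diff 0 1 = (\<Sum>m<2. diff m 0 / fact m * (1 - 0) ^ m) + diff 2 t / fact 2 * (1 - 0) ^ 2"
    using Taylor[of 2 diff "diff 0" 0 1 0 1] D by auto
  have "p 1 = b" "p 0 = a" unfolding p_def d_def by auto
  then have "g b = g a + Dg a \<bullet> d + (1/2) * (d \<bullet> (Hg (p t) *v d))"
    using eq by (simp add: diff_def numeral_2_eq_2)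
  then show ?thesis using t unfolding p_def d_def by (intro bexI[of _ t]) auto
qed

theorem lemma3p5:
  fixes U :: "(real^'n) set" and g :: "real^'n \<Rightarrow> real"
    and Dg :: "real^'n \<Rightarrow> real^'n" and Hg :: "real^'n \<Rightarrow> real^'n^'n"
    and fm fp :: "real \<Rightarrow> real^'n \<Rightarrow> real \<Rightarrow> real^'n \<Rightarrow> real^'n"
    and x :: "real \<Rightarrow> real^'n"
    and tau tk ts alpha Lg :: real and xk xs :: "real^'n"
  assumes U: "bounded U" "open U"
    and g_diff: "\<And>y. y \<in> closure U \<Longrightarrow> (g has_derivative (\<lambda>h. Dg y \<bullet> h)) (at y)"
    and Dg_diff: "\<And>y. y \<in> closure U \<Longrightarrow> (Dg has_derivative (\<lambda>h. Hg y *v h)) (at y)"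
    and Hg_cont: "continuous_on (closure U) Hg"
    and Lg: "Lg-lipschitz_on (closure U) g"
    and tau: "tau > 0"
    and xk: "xk \<in> U" "g xk < 0"
    and ts: "ts \<in> {tk..tk + tau}"
    and xs_eq: "xs = xk + (ts - tk) *\<^sub>R fm tk xk ts xs"
    and xs_S: "g xs = 0"
    and x_minus: "\<And>t. t \<in> {tk..ts} \<Longrightarrow> xs - x t = (ts - t) *\<^sub>R fm t (x t) ts xs"
    and x_plus: "\<And>t. t \<in> {ts..tk + tau} \<Longrightarrow> x t = xs + (t - ts) *\<^sub>R fp ts xs t (x t)"
    and x_ts: "x ts = xs"
    and seg: "\<And>t. t \<in> {tk..tk + tau} \<Longrightarrow> closed_segment (x t) xs \<subseteq> closure U"
    and alpha: "alpha\<^sup>2 > 0"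
    and transv_minus: "\<And>t. t \<in> {tk..ts} \<Longrightarrow> Dg xs \<bullet> fm t (x t) ts xs \<ge> alpha\<^sup>2"
    and transv_plus: "\<And>t. t \<in> {ts..tk + tau} \<Longrightarrow> Dg xs \<bullet> fp ts xs t (x t) \<ge> alpha\<^sup>2"
    and bdd_minus: "bdd_above {\<bar>fm t (x t) ts xs \<bullet> (Hg (x t + s *\<^sub>R (xs - x t)) *v fm t (x t) ts xs)\<bar>
          | t s. t \<in> {tk..ts} \<and> s \<in> {0..1}}"
    and bdd_plus: "bdd_above {\<bar>fp ts xs t (x t) \<bullet> (Hg (xs + s *\<^sub>R (x t - xs)) *v fp ts xs t (x t))\<bar>
          | t s. t \<in> {ts..tk + tau} \<and> s \<in> {0..1}}"
  shows "\<forall>t \<in> {tk..tk + tau}.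
     \<bar>t - ts\<bar> \<le>
       ((1/2) * max (Mhat_minus Hg fm x tk ts xs) (Mhat_plus Hg fp x (tk + tau) ts xs) * (t - ts)\<^sup>2
        + Lg * norm (x t - x ts)) / alpha\<^sup>2"
proof
  fix t assume tI: "t \<in> {tk..tk + tau}"
  define Mm where "Mm = Mhat_minus Hg fm x tk ts xs"
  define Mp where "Mp = Mhat_plus Hg fp x (tk + tau) ts xs"
  define M where "M = max Mm Mp"
  have segt: "closed_segment (x t) xs \<subseteq> closure U" using seg tI by blast
  have xtU: "x t \<in> closure U" and xsU: "xs \<in> closure U" using segt by auto
  have gd: "\<And>y. y \<in> closed_segment xs (x t) \<Longrightarrow> (g has_derivative (\<lambda>h. Dg y \<bullet> h)) (at y)"
    using g_diff segt by (auto simp: closed_segment_commute)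
  have Dd: "\<And>y. y \<in> closed_segment xs (x t) \<Longrightarrow> (Dg has_derivative (\<lambda>h. Hg y *v h)) (at y)"
    using Dg_diff segt by (auto simp: closed_segment_commute)
  have lip: "\<bar>g (x t) - g xs\<bar> \<le> Lg * norm (x t - xs)"
    using lipschitz_onD[OF Lg xtU xsU] by (simp add: dist_real_def dist_norm)
  have key: "\<bar>t - ts\<bar> * alpha\<^sup>2 \<le> (1/2) * M * (t - ts)\<^sup>2 + Lg * norm (x t - xs)"
  proof (cases "t \<le> ts")
    case True
    define h where "h = ts - t"
    define v where "v = fm t (x t) ts xs"
    have tm: "t \<in> {tk..ts}" using True tI by auto
    have hv: "xs - x t = h *\<^sub>R v" using x_minus[OF tm] unfolding h_def v_def .
    have h0: "h \<ge> 0" using True h_def by simp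
    have tr: "alpha\<^sup>2 \<le> Dg xs \<bullet> v" using transv_minus[OF tm] v_def by simp
    have habs: "\<bar>t - ts\<bar> = h" using True h_def by simp
    have low: "h * alpha\<^sup>2 \<le> h * (Dg xs \<bullet> v)" using tr h0 by (simp add: mult_left_mono)
    show ?thesis
    proof (cases "x t = xs")
      case True
      then have "h *\<^sub>R v = 0" using hv by simp
      then have "h * (Dg xs \<bullet> v) = 0" by (metis inner_scaleR_right inner_zero_right)
      then have "h * alpha\<^sup>2 \<le> 0" using low by linarith
      then have "h = 0" using h0 alpha by (simp add: mult_le_0_iff)
      then show ?thesis using habs True by simp
    next
      case False
      obtain s where s: "s \<in> {0..1}" and eq: "g (x t) = g xs + Dg xs \<bullet> (x t - xs)
          + (1/2) * ((x t - xs) \<bullet> (Hg (xs + s *\<^sub>R (x t - xs)) *v (x t - xs)))"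
        using taylor2[of xs "x t" g Dg Hg, OF gd Dd] False by metis
      define q where "q = xs + s *\<^sub>R (x t - xs)"
      define Q where "Q = v \<bullet> (Hg q *v v)"
      have pt: "q = x t + (1 - s) *\<^sub>R (xs - x t)"
        unfolding q_def by (simp add: algebra_simps)
      have d: "x t - xs = (- h) *\<^sub>R v" using hv by (simp add: algebra_simps)
      have eq': "g (x t) = g xs + Dg xs \<bullet> (x t - xs) + (1/2) * ((x t - xs) \<bullet> (Hg q *v (x t - xs)))"
        using eq unfolding q_def .
      have eq2: "g (x t) = g xs - h * (Dg xs \<bullet> v) + (1/2) * h\<^sup>2 * Q"
        using eq' unfolding d Q_def
        by (simp add: matrix_vector_mult_scaleR power2_eq_square algebra_simps)
      have Qd: "Q = v \<bullet> (Hg (x t + (1 - s) *\<^sub>R (xs - x t)) *v v)" unfolding Q_def pt ..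
      have "\<bar>Q\<bar> \<in> {\<bar>fm t (x t) ts xs \<bullet> (Hg (x t + s *\<^sub>R (xs - x t)) *v fm t (x t) ts xs)\<bar>
          | t s. t \<in> {tk..ts} \<and> s \<in> {0..1}}"
        unfolding Qd v_def using tm s by (intro CollectI exI[of _ t] exI[of _ "1 - s"]) auto
      then have "\<bar>Q\<bar> \<le> Mm" unfolding Mm_def Mhat_minus_def by (rule cSup_upper[OF _ bdd_minus])
      then have QM: "\<bar>Q\<bar> \<le> M" unfolding M_def by simp
      have "h\<^sup>2 * Q \<le> h\<^sup>2 * M" using QM by (intro mult_left_mono) auto
      then have "h * (Dg xs \<bullet> v) \<le> (1/2) * M * h\<^sup>2 + Lg * norm (x t - xs)"
        using eq2 lip by (simp add: algebra_simps)
      then show ?thesis using low habs h_def by (simp add: power2_commute)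
    qed
  next
    case False
    define h where "h = t - ts"
    define v where "v = fp ts xs t (x t)"
    have tm: "t \<in> {ts..tk + tau}" using False tI by auto
    have hv: "x t - xs = h *\<^sub>R v" using x_plus[OF tm] unfolding h_def v_def by (simp add: algebra_simps)
    have h0: "h \<ge> 0" using False h_def by simp
    have tr: "alpha\<^sup>2 \<le> Dg xs \<bullet> v" using transv_plus[OF tm] v_def by simp
    have habs: "\<bar>t - ts\<bar> = h" using False h_def by simp
    have low: "h * alpha\<^sup>2 \<le> h * (Dg xs \<bullet> v)" using tr h0 by (simp add: mult_left_mono)
    show ?thesis
    proof (cases "x t = xs")
      case True
      then have "h *\<^sub>R v = 0" using hv by simp
      then have "h * (Dg xs \<bullet> v) = 0" by (metis inner_scaleR_right inner_zero_right)
      then have "h * alpha\<^sup>2 \<le> 0" using low by linarith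
      then have "h = 0" using h0 alpha by (simp add: mult_le_0_iff)
      then show ?thesis using habs True by simp
    next
      case False
      obtain s where s: "s \<in> {0..1}" and eq: "g (x t) = g xs + Dg xs \<bullet> (x t - xs)
          + (1/2) * ((x t - xs) \<bullet> (Hg (xs + s *\<^sub>R (x t - xs)) *v (x t - xs)))"
        using taylor2[of xs "x t" g Dg Hg, OF gd Dd] False by metis
      define Q where "Q = v \<bullet> (Hg (xs + s *\<^sub>R (x t - xs)) *v v)"
      have eq2: "g (x t) = g xs + h * (Dg xs \<bullet> v) + (1/2) * h\<^sup>2 * Q"
        using eq unfolding Q_def hv
        by (simp add: matrix_vector_mult_scaleR power2_eq_square algebra_simps)
      have "\<bar>Q\<bar> \<in> {\<bar>fp ts xs t (x t) \<bullet> (Hg (xs + s *\<^sub>R (x t - xs)) *v fp ts xs t (x t))\<bar>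
          | t s. t \<in> {ts..tk + tau} \<and> s \<in> {0..1}}"
        unfolding Q_def v_def using tm s by auto
      then have "\<bar>Q\<bar> \<le> Mp" unfolding Mp_def Mhat_plus_def by (rule cSup_upper[OF _ bdd_plus])
      then have QM: "\<bar>Q\<bar> \<le> M" unfolding M_def by simp
      have "h\<^sup>2 * (-Q) \<le> h\<^sup>2 * M" using QM by (intro mult_left_mono) auto
      then have "h * (Dg xs \<bullet> v) \<le> (1/2) * M * h\<^sup>2 + Lg * norm (x t - xs)"
        using eq2 lip by (simp add: algebra_simps)
      then show ?thesis using low habs h_def by simp
    qed
  qed
  show "\<bar>t - ts\<bar> \<le> ((1/2) * max (Mhat_minus Hg fm x tk ts xs) (Mhat_plus Hg fp x (tk + tau) ts xs) * (t - ts)\<^sup>2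
        + Lg * norm (x t - x ts)) / alpha\<^sup>2"
    using key alpha unfolding x_ts M_def Mm_def Mp_def by (simp add: pos_le_divide_eq)
qed

end
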